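(* Let $\theta_0\in\mathbb{R}$, let $B\ge1$, and let $\hat\theta_1,\dots,\hat\theta_B$ be independent real-valued random variables. Set $\Delta:=\max_{1\le j\le B}\mathrm{MedBias}_{\theta_0}(\hat\theta_j)$. Then \[ \mathbb{P}\Big(\theta_0\notin\big[\min_{1\le j\le B}\hat\theta_j,\ \max_{1\le j\le B}\hat\theta_j\big]\Big)\le\Big(\tfrac12-\Delta\Big)^B+\Big(\tfrac12+\Delta\Big)^B . \]
   Context: For a real-valued random variable $\hat\theta$ and $\theta_0\in\mathbb{R}$, the median bias is $\mathrm{MedBias}_{\theta_0}(\hat\theta):=\big(\tfrac12-\min\{\mathbb{P}(\hat\theta-\theta_0\ge0),\ \mathbb{P}(\hat\theta-\theta_0\le0)\}\big)_+$, where $(x)_+=\max\{x,0\}$. *)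

theory Defs
  imports "HOL-Probability.Probability"
begin

definition MedBias :: "'a measure \<Rightarrow> real \<Rightarrow> ('a \<Rightarrow> real) \<Rightarrow> real" where
  "MedBias M \<theta>0 X =
     max (1/2 - min (measure M {\<omega> \<in> space M. X \<omega> - \<theta>0 \<ge> 0})
                    (measure M {\<omega> \<in> space M. X \<omega> - \<theta>0 \<le> 0})) 0"

end

theory Submission
  imports Defs
begin

lemma alg_step:
  fixes a b c d P Q n :: real
  assumes "0 \<le> a" "0 \<le> b" "a \<le> d" "b \<le> d" "a + b \<le> 1" "c + d = 1" "c \<le> d"
    "0 \<le> P" "0 \<le> Q" "P \<le> dn" "Q \<le> dn" "P + Q \<le> cn + dn" "0 \<le> c"
  shows "a * P + b * Q \<le> c * cn + d * dn"
proof (cases "Q \<le> P")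
  case True
  have "a * P + b * Q \<le> a * P + (1 - a) * Q" using assms by (simp add: mult_right_mono)
  also have "\<dots> = Q + a * (P - Q)" by (simp add: algebra_simps)
  also have "\<dots> \<le> Q + d * (P - Q)" using True assms by (simp add: mult_right_mono)
  also have "\<dots> = c * (P + Q) + (d - c) * P" using assms(6) by (simp add: algebra_simps flip: distrib_left)
  also have "\<dots> \<le> c * (cn + dn) + (d - c) * dn"
  proof -
    have "c * (P + Q) \<le> c * (cn + dn)" using assms by (intro mult_left_mono) auto
    moreover have "(d - c) * P \<le> (d - c) * dn" using assms by (intro mult_left_mono) auto
    ultimately show ?thesis by linarith
  qed
  also have "\<dots> = c * cn + d * dn" by (simp add: algebra_simps)
  finally show ?thesis .
next
  case False
  have "a * P + b * Q \<le> (1 - b) * P + b * Q" using assms by (simp add: mult_right_mono)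
  also have "\<dots> = P + b * (Q - P)" by (simp add: algebra_simps)
  also have "\<dots> \<le> P + d * (Q - P)" using False assms by (simp add: mult_right_mono)
  also have "\<dots> = c * (P + Q) + (d - c) * Q" using assms(6) by (simp add: algebra_simps flip: distrib_left)
  also have "\<dots> \<le> c * (cn + dn) + (d - c) * dn"
  proof -
    have "c * (P + Q) \<le> c * (cn + dn)" using assms by (intro mult_left_mono) auto
    moreover have "(d - c) * Q \<le> (d - c) * dn" using assms by (intro mult_left_mono) auto
    ultimately show ?thesis by linarith
  qed
  also have "\<dots> = c * cn + d * dn" by (simp add: algebra_simps)
  finally show ?thesis .
qed

lemma alg_prod:
  fixes a b :: "nat \<Rightarrow> real" and c d :: real
  assumes "\<And>j. j \<in> {1..B} \<Longrightarrow> 0 \<le> a j \<and> 0 \<le> b j \<and> a j \<le> d \<and> b j \<le> d \<and> a j + b j \<le> 1"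
    and "c + d = 1" "c \<le> d" "0 \<le> c"
  shows "n \<le> B \<Longrightarrow> (\<Prod>j\<in>{1..n}. a j) + (\<Prod>j\<in>{1..n}. b j) \<le> c ^ n + d ^ n
     \<and> (\<Prod>j\<in>{1..n}. a j) \<le> d ^ n \<and> (\<Prod>j\<in>{1..n}. b j) \<le> d ^ n
     \<and> 0 \<le> (\<Prod>j\<in>{1..n}. a j) \<and> 0 \<le> (\<Prod>j\<in>{1..n}. b j)"
proof (induction n)
  case 0
  then show ?case by simp
next
  case (Suc n)
  have IH: "(\<Prod>j\<in>{1..n}. a j) + (\<Prod>j\<in>{1..n}. b j) \<le> c ^ n + d ^ n
     \<and> (\<Prod>j\<in>{1..n}. a j) \<le> d ^ n \<and> (\<Prod>j\<in>{1..n}. b j) \<le> d ^ n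
     \<and> 0 \<le> (\<Prod>j\<in>{1..n}. a j) \<and> 0 \<le> (\<Prod>j\<in>{1..n}. b j)" using Suc by simp
  have j: "0 \<le> a (Suc n) \<and> 0 \<le> b (Suc n) \<and> a (Suc n) \<le> d \<and> b (Suc n) \<le> d \<and> a (Suc n) + b (Suc n) \<le> 1"
    using assms(1) Suc.prems by simp
  have eq: "{1..Suc n} = insert (Suc n) {1..n}" by auto
  define P where "P = (\<Prod>j\<in>{1..n}. a j)"
  define Q where "Q = (\<Prod>j\<in>{1..n}. b j)"
  have pa: "(\<Prod>j\<in>{1..Suc n}. a j) = a (Suc n) * P" unfolding eq P_def by simp
  have pb: "(\<Prod>j\<in>{1..Suc n}. b j) = b (Suc n) * Q" unfolding eq Q_def by simp
  have s: "a (Suc n) * P + b (Suc n) * Q \<le> c * c ^ n + d * d ^ n"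
    using alg_step[of "a (Suc n)" "b (Suc n)" d c P Q "d^n" "c^n"] j IH assms
    unfolding P_def Q_def by auto
  have "a (Suc n) * P \<le> d * d ^ n" using j IH unfolding P_def
    by (intro mult_mono) auto
  moreover have "b (Suc n) * Q \<le> d * d ^ n" using j IH unfolding Q_def
    by (intro mult_mono) auto
  ultimately show ?case using s j IH unfolding pa pb P_def Q_def by auto
qed

theorem lemma1:
  fixes M :: "'a measure" and X :: "nat \<Rightarrow> 'a \<Rightarrow> real" and \<theta>0 :: real and B :: nat
  assumes "prob_space M"
    and "B \<ge> 1"
    and "\<And>j. j \<in> {1..B} \<Longrightarrow> X j \<in> borel_measurable M"
    and "prob_space.indep_vars M (\<lambda>_. borel) X {1..B}"
  shows "measure M {\<omega> \<in> space M.
            \<theta>0 \<notin> {Min ((\<lambda>j. X j \<omega>) ` {1..B}) .. Max ((\<lambda>j. X j \<omega>) ` {1..B})}}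
         \<le> (1/2 - Max ((\<lambda>j. MedBias M \<theta>0 (X j)) ` {1..B})) ^ B
           + (1/2 + Max ((\<lambda>j. MedBias M \<theta>0 (X j)) ` {1..B})) ^ B"
proof -
  interpret prob_space M by fact
  define D where "D = Max ((\<lambda>j. MedBias M \<theta>0 (X j)) ` {1..B})"
  define c where "c = 1/2 - D"
  define d where "d = 1/2 + D"
  define a where "a = (\<lambda>j. prob (X j -` {\<theta>0<..} \<inter> space M))"
  define b where "b = (\<lambda>j. prob (X j -` {..<\<theta>0} \<inter> space M))"
  have ne: "{1..B} \<noteq> {}" using assms(2) by auto
  have Dge: "MedBias M \<theta>0 (X j) \<le> D" if "j \<in> {1..B}" for j
    unfolding D_def using that by (intro Max_ge) auto
  have D0: "0 \<le> D" using Dge[of 1] assms(2) unfolding MedBias_def by auto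
  have perj: "0 \<le> a j \<and> 0 \<le> b j \<and> a j \<le> d \<and> b j \<le> d \<and> a j + b j \<le> 1"
    if j: "j \<in> {1..B}" for j
  proof -
    have m: "X j \<in> borel_measurable M" using assms(3) j by auto
    define p where "p = prob {\<omega> \<in> space M. X j \<omega> - \<theta>0 \<ge> 0}"
    define q where "q = prob {\<omega> \<in> space M. X j \<omega> - \<theta>0 \<le> 0}"
    have Sp: "{\<omega> \<in> space M. X j \<omega> - \<theta>0 \<ge> 0} \<in> events" using m by measurable
    have Sq: "{\<omega> \<in> space M. X j \<omega> - \<theta>0 \<le> 0} \<in> events" using m by measurable
    have Sa: "X j -` {\<theta>0<..} \<inter> space M \<in> events" using m by measurable
    have Sb: "X j -` {..<\<theta>0} \<inter> space M \<in> events" using m by measurable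
    have mb: "1/2 - min p q \<le> D" using Dge[OF j] unfolding MedBias_def p_def q_def by auto
    have "X j -` {\<theta>0<..} \<inter> space M = space M - {\<omega> \<in> space M. X j \<omega> - \<theta>0 \<le> 0}" by auto
    hence ea: "a j = 1 - q" unfolding a_def q_def using prob_compl[OF Sq] by simp
    have "X j -` {..<\<theta>0} \<inter> space M = space M - {\<omega> \<in> space M. X j \<omega> - \<theta>0 \<ge> 0}" by auto
    hence eb: "b j = 1 - p" unfolding b_def p_def using prob_compl[OF Sp] by simp
    have "a j + b j = prob ((X j -` {\<theta>0<..} \<inter> space M) \<union> (X j -` {..<\<theta>0} \<inter> space M))"
      unfolding a_def b_def by (rule finite_measure_Union[symmetric]) (use Sa Sb in auto)
    also have "\<dots> \<le> 1" by (rule prob_le_1)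
    finally have ab: "a j + b j \<le> 1" .
    have "0 \<le> a j" "0 \<le> b j" unfolding a_def b_def by auto
    moreover have "p \<le> 1" "q \<le> 1" "0 \<le> p" "0 \<le> q" unfolding p_def q_def by auto
    ultimately show ?thesis using ab ea eb mb unfolding d_def by auto
  qed
  have D12: "D \<le> 1/2"
  proof -
    have "D \<in> (\<lambda>j. MedBias M \<theta>0 (X j)) ` {1..B}" unfolding D_def using ne by (intro Max_in) auto
    then obtain j where "D = MedBias M \<theta>0 (X j)" by auto
    moreover have "0 \<le> prob {\<omega> \<in> space M. \<theta>0 \<le> X j \<omega>}" "0 \<le> prob {\<omega> \<in> space M. X j \<omega> \<le> \<theta>0}" by auto
    ultimately show ?thesis unfolding MedBias_def by (simp add: max_def min_def)
  qed
  have alg: "(\<Prod>j\<in>{1..B}. a j) + (\<Prod>j\<in>{1..B}. b j) \<le> c ^ B + d ^ B"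
    using alg_prod[of B a b d c B] perj D0 D12 unfolding c_def d_def by auto
  define EA where "EA = (\<Inter>j\<in>{1..B}. X j -` {\<theta>0<..} \<inter> space M)"
  define EB where "EB = (\<Inter>j\<in>{1..B}. X j -` {..<\<theta>0} \<inter> space M)"
  have pA: "prob EA = (\<Prod>j\<in>{1..B}. a j)" unfolding EA_def a_def
    by (rule indep_varsD[OF assms(4)]) (use ne in auto)
  have pB: "prob EB = (\<Prod>j\<in>{1..B}. b j)" unfolding EB_def b_def
    by (rule indep_varsD[OF assms(4)]) (use ne in auto)
  have evA: "EA \<in> events" unfolding EA_def using ne assms(3)
    by (intro sets.finite_INT) (auto simp: measurable_sets)
  have evB: "EB \<in> events" unfolding EB_def using ne assms(3)
    by (intro sets.finite_INT) (auto simp: measurable_sets)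
  have sub: "{\<omega> \<in> space M.
            \<theta>0 \<notin> {Min ((\<lambda>j. X j \<omega>) ` {1..B}) .. Max ((\<lambda>j. X j \<omega>) ` {1..B})}} \<subseteq> EA \<union> EB"
  proof
    fix \<omega> assume w: "\<omega> \<in> {\<omega> \<in> space M.
            \<theta>0 \<notin> {Min ((\<lambda>j. X j \<omega>) ` {1..B}) .. Max ((\<lambda>j. X j \<omega>) ` {1..B})}}"
    hence "\<theta>0 < Min ((\<lambda>j. X j \<omega>) ` {1..B}) \<or> Max ((\<lambda>j. X j \<omega>) ` {1..B}) < \<theta>0" by auto
    thus "\<omega> \<in> EA \<union> EB" using w ne unfolding EA_def EB_def by auto
  qed
  have "measure M {\<omega> \<in> space M.
            \<theta>0 \<notin> {Min ((\<lambda>j. X j \<omega>) ` {1..B}) .. Max ((\<lambda>j. X j \<omega>) ` {1..B})}} \<le> prob (EA \<union> EB)"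
    using sub evA evB by (intro finite_measure_mono) auto
  also have "\<dots> \<le> prob EA + prob EB" using evA evB by (rule measure_subadditive) auto
  finally show ?thesis using alg pA pB unfolding c_def d_def D_def by linarith
qed

end
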